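(* Let $\alpha,\beta,\omega,\rho,\kappa\in\mathbb{C}$ satisfy $$\mathrm{Re}(\alpha)>0,\quad \mathrm{Re}(\beta)>0,\quad \mathrm{Re}(\kappa)>0,\quad \mathrm{Re}(\kappa-\alpha)<1.$$ Then for any interval $(c,d)\subset\mathbb{R}$ and any function $f\in L^1(c,d)$, the generalised Prabhakar operator can be written as $$\mathcal{E}_{\alpha,\beta;c+}^{\omega,\rho,\kappa}f(x)=\sum_{n=0}^{\infty}\frac{\Gamma(\rho+\kappa n)\,\omega^n}{\Gamma(\rho)\,n!}\,{}^{RL}I_{c+}^{\alpha n+\beta}f(x),$$ where the series on the right-hand side is locally uniformly convergent.
   Context: For $\mathrm{Re}(\gamma)>0$, the Riemann--Liouville fractional integral is ${}^{RL}I_{c+}^{\gamma}f(x)=\frac{1}{\Gamma(\gamma)}\int_c^x (x-t)^{\gamma-1}f(t)\,\mathrm{d}t$. The generalised (four-parameter) Mittag-Leffler function is $$E_{\alpha,\beta}^{\rho,\kappa}(z)=\sum_{n=0}^{\infty}\frac{\Gamma(\rho+\kappa n)\,z^n}{\Gamma(\rho)\,\Gamma(\alpha n+\beta)\,n!},$$ where $\Gamma(\rho+\kappa n)/\Gamma(\rho)$ is the generalised Pochhammer symbol $(\rho)_{\kappa n}$. The generalised Prabhakar fractional integral is $$\mathcal{E}_{\alpha,\beta;c+}^{\omega,\rho,\kappa}f(x)=\int_c^x (x-t)^{\beta-1}E_{\alpha,\beta}^{\rho,\kappa}\big[\omega (x-t)^{\alpha}\big]f(t)\,\mathrm{d}t.$$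 *)

theory Defs
  imports "HOL-Analysis.Analysis"
begin

text \<open>Generalised (four-parameter) Mittag-Leffler function.
  Division by a Gamma value at a pole yields 0 (Isabelle's convention x/0 = 0),
  which agrees with the reciprocal-Gamma convention.\<close>
definition ML4 :: "complex \<Rightarrow> complex \<Rightarrow> complex \<Rightarrow> complex \<Rightarrow> complex \<Rightarrow> complex" where
  "ML4 \<alpha> \<beta> \<rho> \<kappa> z =
     (\<Sum>n. Gamma (\<rho> + \<kappa> * of_nat n) * z ^ n /
            (Gamma \<rho> * Gamma (\<alpha> * of_nat n + \<beta>) * fact n))"

definition RL_int :: "real \<Rightarrow> complex \<Rightarrow> (real \<Rightarrow> complex) \<Rightarrow> real \<Rightarrow> complex" where
  "RL_int c \<gamma> f x =
     (1 / Gamma \<gamma>) * (LINT t:{c<..<x}|lebesgue. of_real (x - t) powr (\<gamma> - 1) * f t)"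

definition prab_kernel ::
  "complex \<Rightarrow> complex \<Rightarrow> complex \<Rightarrow> complex \<Rightarrow> complex \<Rightarrow> real \<Rightarrow> complex" where
  "prab_kernel \<alpha> \<beta> \<omega> \<rho> \<kappa> s =
     of_real s powr (\<beta> - 1) * ML4 \<alpha> \<beta> \<rho> \<kappa> (\<omega> * of_real s powr \<alpha>)"

definition prab_int ::
  "complex \<Rightarrow> complex \<Rightarrow> complex \<Rightarrow> complex \<Rightarrow> complex \<Rightarrow> real \<Rightarrow> (real \<Rightarrow> complex) \<Rightarrow> real \<Rightarrow> complex" where
  "prab_int \<alpha> \<beta> \<omega> \<rho> \<kappa> c f x =
     (LINT t:{c<..<x}|lebesgue. prab_kernel \<alpha> \<beta> \<omega> \<rho> \<kappa> (x - t) * f t)"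

end

theory Submission
  imports Defs "HOL-Real_Asymp.Real_Asymp"
begin

lemma norm_Gamma_series_eq:
  fixes z :: complex
  shows "norm (Gamma_series z n) = fact n * exp (Re z * ln (real n)) / (\<Prod>k<n+1. norm (z + of_nat k))"
proof -
  have "norm (pochhammer z (n+1)) = (\<Prod>k<n+1. norm (z + of_nat k))"
    by (simp add: pochhammer_prod prod_norm atLeast0LessThan)
  moreover have "norm (exp (z * of_real (ln (of_nat n)))) = exp (Re z * ln (real n))"
    by (simp add: norm_exp_eq_Re)
  ultimately show ?thesis
    by (simp add: Gamma_series_def norm_divide norm_mult)
qed

lemma Gamma_series_real_eq:
  fixes x :: real
  shows "Gamma_series x n = fact n * exp (x * ln (real n)) / (\<Prod>k<n+1. x + of_nat k)"
  by (simp add: Gamma_series_def pochhammer_prod atLeast0LessThan)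

lemma norm_Gamma_le_Gamma_Re:
  fixes z :: complex assumes z: "Re z > 0"
  shows "norm (Gamma z) \<le> Gamma (Re z)"
proof -
  have lim1: "(\<lambda>n. norm (Gamma_series z n)) \<longlonglongrightarrow> norm (Gamma z)"
    by (intro tendsto_intros)
  have lim2: "Gamma_series (Re z) \<longlonglongrightarrow> Gamma (Re z)" by (rule Gamma_series_LIMSEQ)
  have "norm (Gamma_series z n) \<le> Gamma_series (Re z) n" for n
  proof -
    have le: "(\<Prod>k<n+1. Re z + of_nat k) \<le> (\<Prod>k<n+1. norm (z + of_nat k))"
    proof (intro prod_mono conjI)
      fix k assume "k \<in> {..<n+1}"
      show "0 \<le> Re z + of_nat k" using z by simp
      have "Re z + of_nat k = Re (z + of_nat k)" by simp
      also have "\<dots> \<le> norm (z + of_nat k)" by (rule complex_Re_le_cmod)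
      finally show "Re z + of_nat k \<le> norm (z + of_nat k)" .
    qed
    have pos: "0 < (\<Prod>k<n+1. Re z + of_nat k)"
      using z by (intro prod_pos) (auto simp: add_pos_nonneg)
    have pos2: "0 < (\<Prod>k<n+1. norm (z + of_nat k))" using pos le by linarith
    show ?thesis unfolding norm_Gamma_series_eq Gamma_series_real_eq
      by (intro divide_left_mono le pos mult_pos_pos mult_nonneg_nonneg pos2) auto
  qed
  then show ?thesis
    by (intro tendsto_le[OF _ lim2 lim1]) auto
qed

lemma sum_inv_sq_bound:
  fixes x :: real assumes x: "x > 0"
  shows "(\<Sum>k<Suc m. 1 / (x + of_nat k)^2) \<le> 1/x^2 + 1/x - 1/(x + of_nat m)"
proof (induction m)
  case 0 then show ?case by simp
next
  case (Suc m)
  define a where "a = x + of_nat m"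
  have a: "a > 0" using x by (simp add: a_def)
  have "1 / (a + 1)^2 \<le> 1 / (a * (a + 1))"
    using a by (intro divide_left_mono) (auto simp: power2_eq_square)
  also have "\<dots> = 1/a - 1/(a+1)" using a by (simp add: field_simps)
  finally have fin: "1 / (a + 1)^2 \<le> 1/a - 1/(a+1)" .
  have e1: "x + of_nat (Suc m) = a + 1" by (simp add: a_def)
  have "1 / (x + of_nat (Suc m))^2 \<le> 1/(x + of_nat m) - 1/(x + of_nat (Suc m))"
    unfolding e1 a_def[symmetric] by (rule fin)
  with Suc show ?case by simp
qed

lemma Gamma_Re_le_norm_Gamma:
  fixes z :: complex assumes z: "Re z > 0"
  shows "Gamma (Re z) \<le> norm (Gamma z) * exp ((Im z)^2 * (1/(Re z)^2 + 1/Re z) / 2)"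
proof -
  define x where "x = Re z"
  define y where "y = Im z"
  define E where "E = exp (y^2 * (1/x^2 + 1/x) / 2)"
  have x: "x > 0" using z by (simp add: x_def)
  have lim1: "(\<lambda>n. norm (Gamma_series z n) * E) \<longlonglongrightarrow> norm (Gamma z) * E"
    by (intro tendsto_intros)
  have lim2: "Gamma_series x \<longlonglongrightarrow> Gamma x" by (rule Gamma_series_LIMSEQ)
  have "Gamma_series x n \<le> norm (Gamma_series z n) * E" for n
  proof -
    have nk: "norm (z + of_nat k) = sqrt ((x + of_nat k)^2 + y^2)" for k
      by (simp add: cmod_def x_def y_def)
    have fac: "norm (z + of_nat k) \<le> (x + of_nat k) * exp (y^2 / (x + of_nat k)^2 / 2)" for k
    proof -
      have xk: "x + of_nat k > 0" using x by simp
      have "(x + of_nat k)^2 + y^2 = (x + of_nat k)^2 * (1 + y^2 / (x + of_nat k)^2)"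
        using xk by (simp add: field_simps)
      also have "\<dots> \<le> (x + of_nat k)^2 * exp (y^2 / (x + of_nat k)^2)"
        by (intro mult_left_mono exp_ge_add_one_self) auto
      also have "\<dots> = ((x + of_nat k) * exp (y^2 / (x + of_nat k)^2 / 2))^2"
        by (simp add: power_mult_distrib exp_double[symmetric] power2_eq_square[of "exp _"] exp_add[symmetric])
      finally show ?thesis unfolding nk
        using xk by (intro real_le_lsqrt) auto
    qed
    have "(\<Prod>k<n+1. norm (z + of_nat k)) \<le> (\<Prod>k<n+1. (x + of_nat k) * exp (y^2 / (x + of_nat k)^2 / 2))"
      by (intro prod_mono conjI norm_ge_zero fac)
    also have "\<dots> = (\<Prod>k<n+1. x + of_nat k) * exp (y^2/2 * (\<Sum>k<n+1. 1 / (x + of_nat k)^2))"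
    proof -
      have e1: "(\<Prod>k<n+1. (x + of_nat k) * exp (y^2 / (x + of_nat k)^2 / 2)) = (\<Prod>k<n+1. x + of_nat k) * (\<Prod>k<n+1. exp (y^2 / (x + of_nat k)^2 / 2))"
        by (rule prod.distrib)
      have e2: "(\<Prod>k<n+1. exp (y^2 / (x + of_nat k)^2 / 2)) = exp (\<Sum>k<n+1. y^2 / (x + of_nat k)^2 / 2)"
        by (intro exp_sum[symmetric]) simp
      have e3: "(\<Sum>k<n+1. y^2 / (x + of_nat k)^2 / 2) = y^2/2 * (\<Sum>k<n+1. 1 / (x + of_nat k)^2)"
        by (subst sum_distrib_left) (intro sum.cong refl, simp)
      show ?thesis unfolding e1 e2 e3 ..
    qed
    also have "\<dots> \<le> (\<Prod>k<n+1. x + of_nat k) * E"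
    proof -
      have "(\<Sum>k<n+1. 1 / (x + of_nat k)^2) \<le> 1/x^2 + 1/x"
      proof -
        have "0 \<le> 1 / (x + of_nat n)" using x by simp
        then show ?thesis using sum_inv_sq_bound[OF x, of n] by (simp only: Suc_eq_plus1)
      qed
      then have "y^2/2 * (\<Sum>k<n+1. 1 / (x + of_nat k)^2) \<le> y^2/2 * (1/x^2 + 1/x)"
        by (intro mult_left_mono) auto
      then show ?thesis unfolding E_def
        using x by (intro mult_left_mono prod_nonneg) (auto simp: add_nonneg_nonneg)
    qed
    finally have P: "(\<Prod>k<n+1. norm (z + of_nat k)) \<le> (\<Prod>k<n+1. x + of_nat k) * E" .
    have pos: "0 < (\<Prod>k<n+1. x + of_nat k)"
      using x by (intro prod_pos) (auto simp: add_pos_nonneg)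
    have posz: "0 < (\<Prod>k<n+1. norm (z + of_nat k))"
    proof (intro prod_pos)
      fix k assume "k \<in> {..<n+1}"
      have "0 < x + of_nat k" using x by simp
      also have "x + of_nat k \<le> norm (z + of_nat k)" unfolding nk by (intro real_le_rsqrt) auto
      finally show "0 < norm (z + of_nat k)" .
    qed
    define F where "F = fact n * exp (x * ln (real n))"
    have F: "F > 0" by (simp add: F_def)
    have "Gamma_series x n = F / (\<Prod>k<n+1. x + of_nat k)"
      unfolding Gamma_series_real_eq F_def ..
    also have "\<dots> \<le> F / ((\<Prod>k<n+1. norm (z + of_nat k)) / E)"
    proof -
      have E: "E > 0" by (simp add: E_def)
      have a1: "(\<Prod>k<n+1. norm (z + of_nat k)) / E \<le> (\<Prod>k<n+1. x + of_nat k)"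
        using P E by (simp add: divide_le_eq mult.commute)
      have a2: "0 < ((\<Prod>k<n+1. norm (z + of_nat k)) / E) * (\<Prod>k<n+1. x + of_nat k)"
        using posz pos E by (intro mult_pos_pos divide_pos_pos)
      show ?thesis using F a2 by (intro divide_left_mono a1) (simp_all add: mult.commute)
    qed
    also have "\<dots> = norm (Gamma_series z n) * E"
      unfolding norm_Gamma_series_eq F_def x_def by (simp add: field_simps)
    finally show ?thesis .
  qed
  then have "Gamma x \<le> norm (Gamma z) * E"
    by (intro tendsto_le[OF _ lim1 lim2]) auto
  then show ?thesis by (simp add: E_def x_def y_def)
qed

lemma pow_div_fact_le_exp:
  fixes x :: real assumes "0 \<le> x"
  shows "x ^ n / fact n \<le> exp x"
proof -
  have "(\<Sum>k\<in>{n}. x ^ k /\<^sub>R fact k) \<le> (\<Sum>k. x ^ k /\<^sub>R fact k)"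
    using assms by (intro sum_le_suminf summable_exp_generic) auto
  then show ?thesis by (simp add: exp_def divide_inverse mult.commute)
qed

lemma ln_fact_ge:
  assumes "k \<ge> 1"
  shows "real k * (ln (real k) - 1) \<le> ln (fact k)"
proof -
  have "real k ^ k / fact k \<le> exp (real k)" by (rule pow_div_fact_le_exp) simp
  then have "real k ^ k \<le> exp (real k) * fact k" by (simp add: divide_le_eq)
  then have "ln (real k ^ k) \<le> ln (exp (real k) * fact k)"
    using assms by (subst ln_le_cancel_iff) auto
  then show ?thesis using assms by (simp add: ln_mult ln_realpow algebra_simps)
qed

lemma phi_mono:
  fixes a b :: real assumes "1 \<le> a" "a \<le> b"
  shows "a * (ln a - 1) \<le> b * (ln b - 1)"
proof (rule DERIV_nonneg_imp_increasing_open[OF assms(2)])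
  fix w assume w: "a < w" "w < b"
  show "\<exists>y. ((\<lambda>w. w * (ln w - 1)) has_real_derivative y) (at w) \<and> 0 \<le> y"
    using w assms by (intro exI[of _ "ln w"] conjI) (auto intro!: derivative_eq_intros)
next
  show "continuous_on {a..b} (\<lambda>w. w * (ln w - 1))"
    using assms by (intro continuous_intros) auto
qed

lemma Gamma_upper:
  fixes u :: real assumes u: "u \<ge> 3/2"
  shows "Gamma u \<le> exp ((u+1) * ln (u+1))"
proof -
  define m where "m = nat \<lceil>u\<rceil>"
  have m1: "real m \<ge> u" "real m < u + 1" using u by (auto simp: m_def) linarith+
  have m2: "m \<ge> 2" using u m1 by linarith
  have "Gamma u \<le> Gamma (real m)"
    using Gamma_real_strict_mono[OF u, of "real m"] m1 by (cases "u = real m") auto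
  also have "real m = 1 + of_nat (m - 1)" using m2 by simp
  also have "Gamma (1 + of_nat (m - 1) :: real) = fact (m - 1)" by (rule Gamma_fact)
  also have "(fact (m - 1) :: real) \<le> of_nat ((m-1)^(m-1))" by (rule fact_le_power)
  also have "(of_nat ((m-1)^(m-1)) :: real) = real (m-1) ^ (m-1)" by simp
  also have "\<dots> \<le> (u+1) ^ (m-1)"
    using m1 m2 u by (intro power_mono) auto
  also have "\<dots> = (u+1) powr real (m-1)" using u by (simp add: powr_realpow)
  also have "\<dots> \<le> (u+1) powr (u+1)" using m1 m2 u by (intro powr_mono) auto
  also have "\<dots> = exp ((u+1) * ln (u+1))" using u by (simp add: powr_def mult.commute)
  finally show ?thesis .
qed

lemma Gamma_lower:
  fixes v :: real assumes v: "v \<ge> 3"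
  shows "exp ((v-2) * (ln (v-2) - 1)) \<le> Gamma v"
proof -
  define m where "m = nat \<lfloor>v\<rfloor>"
  have m1: "real m \<le> v" "v < real m + 1" using v by (auto simp: m_def)
  have m2: "m \<ge> 3" using v m1 by linarith
  have "exp ((v-2) * (ln (v-2) - 1)) \<le> exp (real (m-1) * (ln (real (m-1)) - 1))"
    using m1 m2 v by (intro exp_mono phi_mono) auto
  also have "\<dots> \<le> exp (ln (fact (m-1)))"
    using m2 by (intro exp_mono ln_fact_ge) auto
  also have "\<dots> = fact (m-1)" by simp
  also have "(fact (m - 1) :: real) = Gamma (1 + of_nat (m - 1))" by (rule Gamma_fact[symmetric])
  also have "1 + of_nat (m - 1) = (real m)" using m2 by simp
  also have "Gamma (real m) \<le> Gamma v"
    using Gamma_real_strict_mono[of "real m" v] m1 m2 by (cases "v = real m") auto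
  finally show ?thesis .
qed

lemma coeff_summable:
  fixes \<alpha> \<beta> \<rho> \<kappa> :: complex and R :: real
  assumes "Re \<alpha> > 0" "Re \<kappa> > 0" "Re (\<kappa> - \<alpha>) < 1" "R \<ge> 0"
  shows "summable (\<lambda>n. norm (Gamma (\<rho> + \<kappa> * of_nat n)) * R^n /
                       (norm (Gamma (\<alpha> * of_nat n + \<beta>)) * fact n))"
proof -
  define a where "a = Re \<kappa>"
  define b where "b = Re \<alpha>"
  define p where "p = Re \<rho>"
  define q where "q = Re \<beta>"
  define R' where "R' = R + 1"
  define Y where "Y = (\<bar>Im \<alpha>\<bar> + \<bar>Im \<beta>\<bar>)^2 + 1"
  have a: "a > 0" and b: "b > 0" and ab: "a < b + 1" and R': "R' > 0" and Y: "Y > 0"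
    using assms by (auto simp: a_def b_def R'_def Y_def add_nonneg_pos)
  have ev1: "eventually (\<lambda>n::nat. (p+a*n+1)*ln(p+a*n+1) + n*ln R' - (q+b*n-2)*(ln(q+b*n-2)-1)
     + Y*n^2*(1/(q+b*n)^2 + 1/(q+b*n))/2 - n*(ln n - 1) + n*ln 2 < 0) at_top"
    using a b ab R' Y by real_asymp
  have ev2: "eventually (\<lambda>n::nat. p + a*n \<ge> 3/2) at_top" using a by real_asymp
  have ev3: "eventually (\<lambda>n::nat. q + b*n \<ge> 3) at_top" using b by real_asymp
  have ev4: "eventually (\<lambda>n::nat. n \<ge> 1) at_top" by (rule eventually_ge_at_top)
  have "eventually (\<lambda>n. norm (norm (Gamma (\<rho> + \<kappa> * of_nat n)) * R^n /
                       (norm (Gamma (\<alpha> * of_nat n + \<beta>)) * fact n)) \<le> (1/2)^n) at_top"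
    using ev1 ev2 ev3 ev4
  proof eventually_elim
    case (elim n)
    define u where "u = p + a * n"
    define x where "x = q + b * n"
    define y where "y = Im (\<alpha> * of_nat n + \<beta>)"
    have u: "u \<ge> 3/2" and x: "x \<ge> 3" and n: "n \<ge> 1" using elim by (auto simp: u_def x_def)
    have Reu: "Re (\<rho> + \<kappa> * of_nat n) = u" by (simp add: u_def p_def a_def)
    have Rex: "Re (\<alpha> * of_nat n + \<beta>) = x" by (simp add: x_def q_def b_def)
    define A where "A = (u+1)*ln(u+1)"
    define B where "B = (x-2)*(ln(x-2)-1)"
    define C where "C = Y*n^2*(1/x^2 + 1/x)/2"
    define D where "D = n*(ln n - 1)"
    have L: "A + n*ln R' - B + C - D + n * ln 2 < 0"
      using elim(1) by (simp add: A_def B_def C_def D_def u_def x_def)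
    have N1: "norm (Gamma (\<rho> + \<kappa> * of_nat n)) \<le> exp A"
    proof -
      have "norm (Gamma (\<rho> + \<kappa> * of_nat n)) \<le> Gamma u"
        using norm_Gamma_le_Gamma_Re[of "\<rho> + \<kappa> * of_nat n"] u unfolding Reu by simp
      also have "\<dots> \<le> exp A" unfolding A_def by (rule Gamma_upper[OF u])
      finally show ?thesis .
    qed
    have y2: "y^2 \<le> Y * n^2"
    proof -
      have "\<bar>y\<bar> \<le> \<bar>Im \<alpha>\<bar> * n + \<bar>Im \<beta>\<bar>"
        unfolding y_def using abs_triangle_ineq[of "Im \<alpha> * real n" "Im \<beta>"] by (simp add: abs_mult)
      also have "\<dots> \<le> (\<bar>Im \<alpha>\<bar> + \<bar>Im \<beta>\<bar>) * n"
      proof -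
        have "\<bar>Im \<beta>\<bar> * 1 \<le> \<bar>Im \<beta>\<bar> * real n" using n by (intro mult_left_mono) auto
        then show ?thesis by (simp add: algebra_simps)
      qed
      finally have "\<bar>y\<bar> \<le> (\<bar>Im \<alpha>\<bar> + \<bar>Im \<beta>\<bar>) * n" .
      then have "\<bar>y\<bar>^2 \<le> ((\<bar>Im \<alpha>\<bar> + \<bar>Im \<beta>\<bar>) * n)^2" by (intro power_mono) auto
      also have "\<dots> \<le> Y * n^2" unfolding Y_def power_mult_distrib of_nat_power by (intro mult_right_mono) auto
      finally show ?thesis by simp
    qed
    have D1: "exp (B - C) \<le> norm (Gamma (\<alpha> * of_nat n + \<beta>))"
    proof -
      have x0: "x > 0" using x by simp
      have "exp B \<le> Gamma x" unfolding B_def by (rule Gamma_lower[OF x])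
      also have "\<dots> \<le> norm (Gamma (\<alpha> * of_nat n + \<beta>)) * exp (y^2 * (1/x^2 + 1/x) / 2)"
        using Gamma_Re_le_norm_Gamma[of "\<alpha> * of_nat n + \<beta>"] x0 unfolding Rex y_def by simp
      also have "\<dots> \<le> norm (Gamma (\<alpha> * of_nat n + \<beta>)) * exp C"
        unfolding C_def using y2 x0
        by (intro mult_left_mono exp_mono divide_right_mono mult_right_mono) auto
      finally have "exp B \<le> norm (Gamma (\<alpha> * of_nat n + \<beta>)) * exp C" .
      then show ?thesis by (simp add: exp_diff divide_le_eq)
    qed
    have F1: "exp D \<le> fact n"
      using ln_fact_ge[OF n] unfolding D_def
      by (metis exp_le_cancel_iff exp_ln fact_gt_zero)
    have R1: "R^n \<le> exp (n * ln R')"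
    proof -
      have "R^n \<le> R'^n" using assms(4) by (intro power_mono) (auto simp: R'_def)
      also have "\<dots> = exp (n * ln R')" using R' by (simp add: exp_of_nat_mult)
      finally show ?thesis .
    qed
    have "norm (norm (Gamma (\<rho> + \<kappa> * of_nat n)) * R^n /
                       (norm (Gamma (\<alpha> * of_nat n + \<beta>)) * fact n))
          = norm (Gamma (\<rho> + \<kappa> * of_nat n)) * R^n /
                       (norm (Gamma (\<alpha> * of_nat n + \<beta>)) * fact n)"
      using assms(4) by simp
    also have "\<dots> \<le> exp A * exp (n * ln R') / (exp (B - C) * exp D)"
      using N1 R1 D1 F1 assms(4)
      by (intro frac_le mult_mono mult_pos_pos) auto
    also have "\<dots> = exp (A + n * ln R' - B + C - D)" by (simp add: exp_add exp_diff)
    also have "\<dots> \<le> exp (- (n * ln 2))" using L by simp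
    also have "\<dots> = (1/2)^n" by (simp add: exp_minus exp_of_nat_mult power_one_over inverse_eq_divide)
    finally show ?case .
  qed
  then show ?thesis
    by (rule summable_comparison_test_ev) (simp add: summable_geometric)
qed

lemma inner_bound:
  fixes s D t :: real assumes s: "s > 0" and D: "D \<ge> 0"
  shows "(\<integral>\<^sup>+x. ennreal (if t < x \<and> x < t + D then (x - t) powr (s - 1) else 0) \<partial>lborel)
          \<le> ennreal (D powr s / s)"
proof -
  have "(\<integral>\<^sup>+x. ennreal (if t < x \<and> x < t + D then (x - t) powr (s - 1) else 0) \<partial>lborel)
        \<le> (\<integral>\<^sup>+x. ennreal (indicator {0..D} (x - t) * (x - t) powr (s - 1)) \<partial>lborel)"
    by (intro nn_integral_mono) (auto simp: indicator_def)
  also have "\<dots> = ennreal \<bar>1\<bar> * (\<integral>\<^sup>+y. ennreal (indicator {0..D} ((t + 1 * y) - t) * ((t + 1 * y) - t) powr (s - 1)) \<partial>lborel)"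
    by (rule nn_integral_real_affine[where c = 1 and t = t]) auto
  also have "\<dots> = (\<integral>\<^sup>+y. ennreal (indicator {0..D} y * y powr (s - 1)) \<partial>lborel)"
    by simp
  also have "\<dots> = ennreal (D powr (s - 1 + 1) / (s - 1 + 1))"
    using s D by (intro nn_integral_has_integral_lebesgue has_integral_powr_from_0) auto
  finally show ?thesis by simp
qed

lemma ae_finite:
  fixes f :: "real \<Rightarrow> complex" and s c d :: real
  assumes s: "s > 0" and cd: "c < d" and f: "set_integrable lebesgue {c<..<d} f"
  shows "AE x in lebesgue. x \<in> {c<..<d} \<longrightarrow>
     (\<integral>\<^sup>+t. ennreal (indicator {c<..<x} t * (x - t) powr (s - 1) * norm (f t)) \<partial>lebesgue) \<noteq> \<infinity>"
proof -
  define \<phi> where "\<phi> t = ennreal (norm (indicator {c<..<d} t *\<^sub>R f t))" for t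
  have fm: "(\<lambda>t. indicator {c<..<d} t *\<^sub>R f t) \<in> borel_measurable lebesgue"
    using f unfolding set_integrable_def by (rule borel_measurable_integrable)
  have "\<phi> \<in> borel_measurable lebesgue" unfolding \<phi>_def using fm by measurable
  from completion_ex_borel_measurable[OF this]
  obtain \<psi> where \<psi>m: "\<psi> \<in> borel_measurable lborel" and \<psi>ae: "AE t in lborel. \<phi> t = \<psi> t"
    by blast
  have \<psi>b[measurable]: "\<psi> \<in> borel_measurable borel" using \<psi>m by simp
  have fin\<phi>: "(\<integral>\<^sup>+t. \<phi> t \<partial>lebesgue) < \<infinity>"
    using f unfolding set_integrable_def integrable_iff_bounded \<phi>_def by blast
  have fin\<psi>: "(\<integral>\<^sup>+t. \<psi> t \<partial>lborel) < \<infinity>"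
  proof -
    have "(\<integral>\<^sup>+t. \<psi> t \<partial>lborel) = (\<integral>\<^sup>+t. \<phi> t \<partial>lborel)"
      using \<psi>ae by (intro nn_integral_cong_AE) auto
    also have "\<dots> = (\<integral>\<^sup>+t. \<phi> t \<partial>lebesgue)" by (simp add: nn_integral_completion)
    finally show ?thesis using fin\<phi> by simp
  qed
  define G where "G x t = ennreal (if c < t \<and> t < x \<and> x < d then (x - t) powr (s - 1) else 0) * \<psi> t" for x t
  have Gm: "(\<lambda>(x, t). G x t) \<in> borel_measurable (lborel \<Otimes>\<^sub>M lborel)"
    unfolding G_def by measurable
  have "(\<integral>\<^sup>+x. (\<integral>\<^sup>+t. G x t \<partial>lborel) \<partial>lborel) = (\<integral>\<^sup>+t. (\<integral>\<^sup>+x. G x t \<partial>lborel) \<partial>lborel)"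
    using lborel_pair.Fubini'[of G, OF Gm] by simp
  also have "\<dots> \<le> (\<integral>\<^sup>+t. ennreal ((d - c) powr s / s) * \<psi> t \<partial>lborel)"
  proof (intro nn_integral_mono)
    fix t :: real
    have "(\<integral>\<^sup>+x. G x t \<partial>lborel) = (\<integral>\<^sup>+x. ennreal (if c < t \<and> t < x \<and> x < d then (x - t) powr (s - 1) else 0) \<partial>lborel) * \<psi> t"
      unfolding G_def by (rule nn_integral_multc) measurable
    also have "\<dots> \<le> ennreal ((d - c) powr s / s) * \<psi> t"
    proof (cases "c < t")
      case True
      have "(\<integral>\<^sup>+x. ennreal (if c < t \<and> t < x \<and> x < d then (x - t) powr (s - 1) else 0) \<partial>lborel)
           \<le> (\<integral>\<^sup>+x. ennreal (if t < x \<and> x < t + (d - c) then (x - t) powr (s - 1) else 0) \<partial>lborel)"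
        using True by (intro nn_integral_mono) auto
      also have "\<dots> \<le> ennreal ((d - c) powr s / s)"
        using s cd by (intro inner_bound) auto
      finally show ?thesis by (intro mult_right_mono) auto
    qed simp
    finally show "(\<integral>\<^sup>+x. G x t \<partial>lborel) \<le> ennreal ((d - c) powr s / s) * \<psi> t" .
  qed
  also have "\<dots> = ennreal ((d - c) powr s / s) * (\<integral>\<^sup>+t. \<psi> t \<partial>lborel)"
    by (rule nn_integral_cmult) simp
  also have "\<dots> < \<infinity>" using fin\<psi> by (simp add: ennreal_mult_less_top)
  finally have "(\<integral>\<^sup>+x. (\<integral>\<^sup>+t. G x t \<partial>lborel) \<partial>lborel) \<noteq> \<infinity>" by simp
  then have "AE x in lborel. (\<integral>\<^sup>+t. G x t \<partial>lborel) \<noteq> \<infinity>"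
    by (intro nn_integral_PInf_AE) (use Gm in \<open>auto intro: lborel.borel_measurable_nn_integral\<close>)
  then have "AE x in lebesgue. (\<integral>\<^sup>+t. G x t \<partial>lborel) \<noteq> \<infinity>"
    by (rule AE_completion)
  then show ?thesis
  proof eventually_elim
    case (elim x)
    show ?case
    proof
      assume x: "x \<in> {c<..<d}"
      have "(\<integral>\<^sup>+t. ennreal (indicator {c<..<x} t * (x - t) powr (s - 1) * norm (f t)) \<partial>lebesgue)
          = (\<integral>\<^sup>+t. ennreal (indicator {c<..<x} t * (x - t) powr (s - 1) * norm (f t)) \<partial>lborel)"
        by (simp add: nn_integral_completion)
      also have "\<dots> = (\<integral>\<^sup>+t. G x t \<partial>lborel)"
        using \<psi>ae
      proof (intro nn_integral_cong_AE, eventually_elim)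
        case (elim t)
        then show ?case using x
          by (auto simp: G_def \<phi>_def indicator_def ennreal_mult)
      qed
      finally show "(\<integral>\<^sup>+t. ennreal (indicator {c<..<x} t * (x - t) powr (s - 1) * norm (f t)) \<partial>lebesgue) \<noteq> \<infinity>"
        using elim by simp
    qed
  qed
qed

lemma cpow_real: "s > 0 \<Longrightarrow> complex_of_real s powr z = exp (z * of_real (ln s))"
  by (simp add: powr_def Ln_of_real)

lemma kernel_series:
  fixes \<alpha> \<beta> \<omega> \<rho> \<kappa> y :: complex and s :: real
  assumes "Re \<alpha> > 0" "Re \<kappa> > 0" "Re (\<kappa> - \<alpha>) < 1" and s: "s > 0"
  shows "prab_kernel \<alpha> \<beta> \<omega> \<rho> \<kappa> s * y =
    (\<Sum>n. (Gamma (\<rho> + \<kappa> * of_nat n) * \<omega> ^ n / (Gamma \<rho> * fact n) * (1 / Gamma (\<alpha> * of_nat n + \<beta>)))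
          * (of_real s powr (\<alpha> * of_nat n + \<beta> - 1) * y))"
proof -
  define z where "z = \<omega> * of_real s powr \<alpha>"
  define T where "T n = Gamma (\<rho> + \<kappa> * of_nat n) * z ^ n / (Gamma \<rho> * Gamma (\<alpha> * of_nat n + \<beta>) * fact n)" for n
  have S: "summable (\<lambda>n. norm (Gamma (\<rho> + \<kappa> * of_nat n)) * norm z ^ n /
                       (norm (Gamma (\<alpha> * of_nat n + \<beta>)) * fact n) / norm (Gamma \<rho>))"
    by (intro summable_divide coeff_summable assms) simp
  have eqn: "(\<lambda>n. norm (T n)) = (\<lambda>n. norm (Gamma (\<rho> + \<kappa> * of_nat n)) * norm z ^ n /
                       (norm (Gamma (\<alpha> * of_nat n + \<beta>)) * fact n) / norm (Gamma \<rho>))"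
    by (rule ext) (simp add: T_def norm_divide norm_mult norm_power)
  have sT: "summable T"
    by (rule summable_norm_cancel) (unfold eqn, rule S)
  have "prab_kernel \<alpha> \<beta> \<omega> \<rho> \<kappa> s * y = of_real s powr (\<beta> - 1) * (\<Sum>n. T n) * y"
    unfolding prab_kernel_def ML4_def T_def z_def by (simp only: mult.assoc)
  also have "\<dots> = (\<Sum>n. of_real s powr (\<beta> - 1) * T n * y)"
    using suminf_mult[OF sT, of "of_real s powr (\<beta> - 1)"] suminf_mult2[OF summable_mult[OF sT, of "of_real s powr (\<beta> - 1)"], of y] by simp
  also have "\<dots> = (\<Sum>n. (Gamma (\<rho> + \<kappa> * of_nat n) * \<omega> ^ n / (Gamma \<rho> * fact n) * (1 / Gamma (\<alpha> * of_nat n + \<beta>)))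
          * (of_real s powr (\<alpha> * of_nat n + \<beta> - 1) * y))"
  proof (intro suminf_cong)
    fix n
    have e1: "(of_real s powr \<alpha>)^n = exp (of_nat n * (\<alpha> * of_real (ln s)))"
      using s by (simp add: cpow_real exp_of_nat_mult[symmetric])
    have e2: "of_real s powr (\<alpha> * of_nat n + \<beta> - 1) = exp (of_nat n * (\<alpha> * of_real (ln s))) * of_real s powr (\<beta> - 1)"
      using s unfolding cpow_real[OF s] by (simp add: exp_add[symmetric] ring_distribs mult_ac diff_add_eq add_diff_eq)
    show "of_real s powr (\<beta> - 1) * T n * y = (Gamma (\<rho> + \<kappa> * of_nat n) * \<omega> ^ n / (Gamma \<rho> * fact n) * (1 / Gamma (\<alpha> * of_nat n + \<beta>)))
          * (of_real s powr (\<alpha> * of_nat n + \<beta> - 1) * y)"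
      unfolding T_def z_def power_mult_distrib e1 e2
      by (simp add: divide_inverse inverse_mult_distrib mult_ac)
  qed
  finally show ?thesis .
qed

lemma powr_split_bound:
  fixes r L a b :: real and n :: nat
  assumes r: "0 < r" "r \<le> L" and a: "0 \<le> a"
  shows "r powr (a * n + b) \<le> (L powr a)^n * r powr b"
proof -
  have "r powr (a * n + b) = r powr (a * n) * r powr b" by (simp add: powr_add)
  also have "\<dots> \<le> L powr (a * n) * r powr b"
    using r a by (intro mult_right_mono powr_mono2) auto
  also have "L powr (a * n) = (L powr a)^n"
    using r by (simp add: powr_powr[symmetric] powr_realpow)
  finally show ?thesis .
qed

lemma powr_split_bound2:
  fixes r L a b :: real and n :: nat
  assumes r: "0 < r" "r \<le> L" and e: "0 \<le> a * n + b"
  shows "r powr (a * n + b) \<le> (L powr a)^n * L powr b"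
proof -
  have "r powr (a * n + b) \<le> L powr (a * n + b)"
    using r e by (intro powr_mono2) auto
  also have "\<dots> = L powr (a * n) * L powr b" by (simp add: powr_add)
  also have "L powr (a * n) = (L powr a)^n"
    using r by (simp add: powr_powr[symmetric] powr_realpow)
  finally show ?thesis .
qed

lemma leb_meas: "f \<in> borel_measurable borel \<Longrightarrow> f \<in> borel_measurable lebesgue"
  by (rule measurable_completion) simp

lemma norm_cpow_real: "r > 0 \<Longrightarrow> norm (complex_of_real r powr z) = r powr Re z"
  by (simp add: norm_powr_real_powr)

theorem theorem2p1:
  fixes \<alpha> \<beta> \<omega> \<rho> \<kappa> :: complex and c d :: real and f :: "real \<Rightarrow> complex"
  assumes "Re \<alpha> > 0" and "Re \<beta> > 0" and "Re \<kappa> > 0" and "Re (\<kappa> - \<alpha>) < 1"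
    and "c < d"
    and "set_integrable lebesgue {c<..<d} f"
  shows "(AE x in lebesgue. x \<in> {c<..<d} \<longrightarrow>
           set_integrable lebesgue {c<..<x} (\<lambda>t. prab_kernel \<alpha> \<beta> \<omega> \<rho> \<kappa> (x - t) * f t) \<and>
           (\<lambda>n. Gamma (\<rho> + \<kappa> * of_nat n) * \<omega> ^ n / (Gamma \<rho> * fact n)
                  * RL_int c (\<alpha> * of_nat n + \<beta>) f x)
             sums prab_int \<alpha> \<beta> \<omega> \<rho> \<kappa> c f x) \<and>
         (\<forall>K. compact K \<and> K \<subseteq> {c<..<d} \<longrightarrow>
           uniformly_Cauchy_on K (\<lambda>N x. \<Sum>n<N. Gamma (\<rho> + \<kappa> * of_nat n) * \<omega> ^ n / (Gamma \<rho> * fact n)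
                  * RL_int c (\<alpha> * of_nat n + \<beta>) f x))"
proof -
  define A where "A n = Gamma (\<rho> + \<kappa> * of_nat n) * \<omega> ^ n / (Gamma \<rho> * fact n)" for n
  define Kc where "Kc n = A n * (1 / Gamma (\<alpha> * of_nat n + \<beta>))" for n
  define s where "s = Re \<beta>"
  define L where "L = max 1 (d - c)"
  define M where "M = L powr Re \<alpha>"
  define f0 where "f0 t = indicator {c<..<d} t *\<^sub>R f t" for t
  define nf where "nf = (LINT t|lebesgue. norm (f0 t))"
  have s: "s > 0" using assms(2) by (simp add: s_def)
  have L1: "L \<ge> 1" by (simp add: L_def)
  have dcL: "d - c \<le> L" by (simp add: L_def)
  have M0: "M \<ge> 0" by (simp add: M_def)
  have nf0: "nf \<ge> 0" unfolding nf_def by (intro integral_nonneg_AE) auto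
  have fint: "integrable lebesgue f0"
    using assms(6) unfolding set_integrable_def f0_def .
  have f0m[measurable]: "f0 \<in> borel_measurable lebesgue"
    using fint by (rule borel_measurable_integrable)
  have sumC: "summable (\<lambda>n. norm (Kc n) * M^n)"
  proof -
    have S: "summable (\<lambda>n. norm (Gamma (\<rho> + \<kappa> * of_nat n)) * (norm \<omega> * M)^n /
               (norm (Gamma (\<alpha> * of_nat n + \<beta>)) * fact n) / norm (Gamma \<rho>))"
      using assms M0 by (intro summable_divide coeff_summable) auto
    have eq: "(\<lambda>n. norm (Gamma (\<rho> + \<kappa> * of_nat n)) * (norm \<omega> * M)^n /
               (norm (Gamma (\<alpha> * of_nat n + \<beta>)) * fact n) / norm (Gamma \<rho>)) = (\<lambda>n. norm (Kc n) * M^n)"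
      by (rule ext) (simp add: Kc_def A_def norm_divide norm_mult norm_power norm_inverse power_mult_distrib
                         divide_inverse inverse_mult_distrib mult_ac)
    show ?thesis using S unfolding eq .
  qed
  have RLeq: "A n * RL_int c (\<alpha> * of_nat n + \<beta>) f x =
     Kc n * (LINT t|lebesgue. indicator {c<..<x} t *\<^sub>R (of_real (x - t) powr (\<alpha> * of_nat n + \<beta> - 1) * f t))"
    for n x
    by (simp add: RL_int_def Kc_def set_lebesgue_integral_def)

  have bnd: "norm (A n * RL_int c (\<alpha> * of_nat n + \<beta>) f x) \<le> norm (Kc n) * M^n * (L powr (s - 1) * nf)"
    if x: "x \<in> {c<..<d}" and en: "0 \<le> Re \<alpha> * n + (s - 1)" for n x
  proof -
    define g where "g t = indicator {c<..<x} t *\<^sub>R (of_real (x - t) powr (\<alpha> * of_nat n + \<beta> - 1) * f t)" for t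
    define E where "E = M^n * L powr (s - 1)"
    have E0: "E \<ge> 0" using M0 by (simp add: E_def)
    have gb: "norm (g t) \<le> E * norm (f0 t)" for t
    proof (cases "c < t \<and> t < x")
      case True
      have "norm (g t) = (x - t) powr (Re \<alpha> * n + (s - 1)) * norm (f t)"
        using True by (simp add: g_def norm_mult norm_cpow_real s_def algebra_simps del: of_real_diff)
      also have "\<dots> \<le> E * norm (f t)"
        unfolding E_def M_def using True x dcL
        by (intro mult_right_mono powr_split_bound2 en) auto
      also have "norm (f t) = norm (f0 t)" using True x by (simp add: f0_def)
      finally show ?thesis .
    next
      case False
      then show ?thesis using E0 by (auto simp: g_def)
    qed
    have ig: "norm (integral\<^sup>L lebesgue g) \<le> (LINT t|lebesgue. E * norm (f0 t))"
    proof (cases "integrable lebesgue g")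
      case True
      show ?thesis
        by (rule Bochner_Integration.integral_norm_bound_integral[OF True]) (use fint gb in auto)
    next
      case False
      then show ?thesis using E0 by (simp add: not_integrable_integral_eq)
    qed
    have "norm (A n * RL_int c (\<alpha> * of_nat n + \<beta>) f x) = norm (Kc n) * norm (integral\<^sup>L lebesgue g)"
      unfolding RLeq g_def by (simp add: norm_mult)
    also have "\<dots> \<le> norm (Kc n) * (E * nf)"
      using ig by (intro mult_left_mono) (auto simp: nf_def)
    finally show ?thesis by (simp add: E_def mult_ac)
  qed
  have unif: "uniformly_Cauchy_on K (\<lambda>N x. \<Sum>n<N. A n * RL_int c (\<alpha> * of_nat n + \<beta>) f x)"
    if K: "K \<subseteq> {c<..<d}" for K
  proof -
    have ev: "eventually (\<lambda>n::nat. 0 \<le> Re \<alpha> * n + (s - 1)) at_top"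
      using assms(1) by real_asymp
    have "eventually (\<lambda>n. \<forall>x\<in>K. norm (A n * RL_int c (\<alpha> * of_nat n + \<beta>) f x)
             \<le> norm (Kc n) * M^n * (L powr (s - 1) * nf)) at_top"
      using ev by eventually_elim (use K bnd in blast)
    moreover have "summable (\<lambda>n. norm (Kc n) * M^n * (L powr (s - 1) * nf))"
      by (rule summable_mult2[OF sumC])
    ultimately have "uniform_limit K (\<lambda>N x. \<Sum>n<N. A n * RL_int c (\<alpha> * of_nat n + \<beta>) f x)
       (\<lambda>x. \<Sum>n. A n * RL_int c (\<alpha> * of_nat n + \<beta>) f x) sequentially"
      by (rule Weierstrass_m_test_ev)
    then have "uniformly_convergent_on K (\<lambda>N x. \<Sum>n<N. A n * RL_int c (\<alpha> * of_nat n + \<beta>) f x)"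
      unfolding uniformly_convergent_on_def by blast
    then show ?thesis by (rule uniformly_convergent_Cauchy)
  qed

  have ae: "AE x in lebesgue. x \<in> {c<..<d} \<longrightarrow>
     set_integrable lebesgue {c<..<x} (\<lambda>t. prab_kernel \<alpha> \<beta> \<omega> \<rho> \<kappa> (x - t) * f t) \<and>
     (\<lambda>n. A n * RL_int c (\<alpha> * of_nat n + \<beta>) f x) sums prab_int \<alpha> \<beta> \<omega> \<rho> \<kappa> c f x"
    using ae_finite[OF s assms(5,6)]
  proof eventually_elim
    case (elim x)
    show ?case
    proof
      assume x: "x \<in> {c<..<d}"
      define H where "H t = indicator {c<..<x} t * (x - t) powr (s - 1) * norm (f t)" for t
      have H0: "H t \<ge> 0" for t by (simp add: H_def)
      have Heq: "H t = indicator {c<..<x} t * (x - t) powr (s - 1) * norm (f0 t)" for t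
        using x by (auto simp: H_def f0_def indicator_def)
      have P1: "(\<lambda>t. indicator {c<..<x} t * (x - t) powr (s - 1)) \<in> borel_measurable lebesgue"
        by (rule leb_meas) measurable
      have Hm[measurable]: "H \<in> borel_measurable lebesgue"
        unfolding Heq[abs_def] using borel_measurable_times[OF P1 measurable_compose[OF f0m borel_measurable_norm]] by simp
      have Hint: "integrable lebesgue H"
        unfolding integrable_iff_bounded
      proof
        show "H \<in> borel_measurable lebesgue" by (rule Hm)
        have "(\<integral>\<^sup>+t. ennreal (norm (H t)) \<partial>lebesgue) = (\<integral>\<^sup>+t. ennreal (H t) \<partial>lebesgue)"
          using H0 by simp
        also have "\<dots> < \<infinity>" using elim x by (simp add: H_def less_top)
        finally show "(\<integral>\<^sup>+t. ennreal (norm (H t)) \<partial>lebesgue) < \<infinity>" .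
      qed
      define F where "F n t = Kc n * (indicator {c<..<x} t *\<^sub>R (of_real (x - t) powr (\<alpha> * of_nat n + \<beta> - 1) * f t))" for n t
      have Fb: "norm (F n t) \<le> norm (Kc n) * M^n * H t" for n t
      proof (cases "c < t \<and> t < x")
        case True
        have "norm (F n t) = norm (Kc n) * ((x - t) powr (Re \<alpha> * n + (s - 1)) * norm (f t))"
          using True by (simp add: F_def norm_mult norm_cpow_real s_def algebra_simps del: of_real_diff)
        also have "\<dots> \<le> norm (Kc n) * ((M^n * (x - t) powr (s - 1)) * norm (f t))"
          unfolding M_def using True x dcL assms(1)
          by (intro mult_left_mono mult_right_mono powr_split_bound) auto
        also have "\<dots> = norm (Kc n) * M^n * H t" using True by (simp add: H_def mult_ac)
        finally show ?thesis .
      next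
        case False
        then show ?thesis by (auto simp: F_def H_def)
      qed
      have Feq: "F n t = Kc n * ((of_real (indicator {c<..<x} t) * exp ((\<alpha> * of_nat n + \<beta> - 1) * of_real (ln (x - t)))) * f0 t)" for n t
        using x by (auto simp: F_def f0_def indicator_def cpow_real simp del: of_real_diff)
      have P2: "(\<lambda>t. of_real (indicator {c<..<x} t) * exp ((\<alpha> * of_nat n + \<beta> - 1) * of_real (ln (x - t)))) \<in> borel_measurable lebesgue" for n
        by (rule leb_meas) measurable
      have Fm[measurable]: "F n \<in> borel_measurable lebesgue" for n
        unfolding Feq[abs_def] using borel_measurable_times[OF borel_measurable_const borel_measurable_times[OF P2[of n] f0m]] by simp
      have Fi: "integrable lebesgue (F n)" for n
      proof (rule Bochner_Integration.integrable_bound)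
        show "integrable lebesgue (\<lambda>t. norm (Kc n) * M^n * H t)"
          using Hint by (rule integrable_mult_right)
        show "F n \<in> borel_measurable lebesgue" by (rule Fm)
        show "AE t in lebesgue. norm (F n t) \<le> norm (norm (Kc n) * M^n * H t)"
          using Fb H0 M0 by (auto intro: order_trans[OF Fb])
      qed
      have S1: "AE t in lebesgue. summable (\<lambda>n. norm (F n t))"
      proof (intro AE_I2)
        fix t
        show "summable (\<lambda>n. norm (F n t))"
          by (rule summable_comparison_test[OF _ summable_mult2[OF sumC, of "H t"]])
             (use Fb in auto)
      qed
      have S2: "summable (\<lambda>n. LINT t|lebesgue. norm (F n t))"
      proof (rule summable_comparison_test[OF _ summable_mult2[OF sumC, of "LINT t|lebesgue. H t"]])
        show "\<exists>N. \<forall>n\<ge>N. norm (LINT t|lebesgue. norm (F n t)) \<le> norm (Kc n) * M^n * (LINT t|lebesgue. H t)"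
        proof (intro exI allI impI)
          fix n :: nat
          have "norm (LINT t|lebesgue. norm (F n t)) = (LINT t|lebesgue. norm (F n t))"
            by (simp add: integral_nonneg)
          also have "\<dots> \<le> (LINT t|lebesgue. norm (Kc n) * M^n * H t)"
            by (intro integral_mono integrable_norm Fi integrable_mult_right Hint Fb)
          also have "\<dots> = norm (Kc n) * M^n * (LINT t|lebesgue. H t)" by simp
          finally show "norm (LINT t|lebesgue. norm (F n t)) \<le> norm (Kc n) * M^n * (LINT t|lebesgue. H t)" .
        qed
      qed
      have I1: "integrable lebesgue (\<lambda>t. \<Sum>n. F n t)"
        by (rule integrable_suminf[OF Fi S1 S2])
      have I2: "(LINT t|lebesgue. (\<Sum>n. F n t)) = (\<Sum>n. LINT t|lebesgue. F n t)"
        by (rule integral_suminf[OF Fi S1 S2])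
      have pw: "indicator {c<..<x} t *\<^sub>R (prab_kernel \<alpha> \<beta> \<omega> \<rho> \<kappa> (x - t) * f t) = (\<Sum>n. F n t)" for t
      proof (cases "c < t \<and> t < x")
        case True
        then have "indicator {c<..<x} t *\<^sub>R (prab_kernel \<alpha> \<beta> \<omega> \<rho> \<kappa> (x - t) * f t)
             = prab_kernel \<alpha> \<beta> \<omega> \<rho> \<kappa> (x - t) * f t" by simp
        also have "\<dots> = (\<Sum>n. Kc n * (of_real (x - t) powr (\<alpha> * of_nat n + \<beta> - 1) * f t))"
          unfolding Kc_def A_def using True by (intro kernel_series assms) auto
        also have "\<dots> = (\<Sum>n. F n t)" using True by (simp add: F_def)
        finally show ?thesis .
      next
        case False
        then show ?thesis by (simp add: F_def)
      qed
      have c1: "set_integrable lebesgue {c<..<x} (\<lambda>t. prab_kernel \<alpha> \<beta> \<omega> \<rho> \<kappa> (x - t) * f t)"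
        unfolding set_integrable_def pw by (rule I1)
      have LF: "(LINT t|lebesgue. F n t) = A n * RL_int c (\<alpha> * of_nat n + \<beta>) f x" for n
        unfolding RLeq F_def by (rule integral_mult_right_zero)
      have S3: "summable (\<lambda>n. LINT t|lebesgue. F n t)"
      proof (rule summable_norm_cancel, rule summable_comparison_test[OF _ S2])
        show "\<exists>N. \<forall>n\<ge>N. norm (norm (LINT t|lebesgue. F n t)) \<le> (LINT t|lebesgue. norm (F n t))"
          by (intro exI allI impI) (simp add: integral_norm_bound)
      qed
      have "(\<lambda>n. LINT t|lebesgue. F n t) sums (\<Sum>n. LINT t|lebesgue. F n t)"
        by (rule summable_sums[OF S3])
      also have "(\<Sum>n. LINT t|lebesgue. F n t) = prab_int \<alpha> \<beta> \<omega> \<rho> \<kappa> c f x"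
        unfolding I2[symmetric] prab_int_def set_lebesgue_integral_def pw ..
      finally have c2: "(\<lambda>n. A n * RL_int c (\<alpha> * of_nat n + \<beta>) f x) sums prab_int \<alpha> \<beta> \<omega> \<rho> \<kappa> c f x"
        unfolding LF .
      show "set_integrable lebesgue {c<..<x} (\<lambda>t. prab_kernel \<alpha> \<beta> \<omega> \<rho> \<kappa> (x - t) * f t) \<and>
        (\<lambda>n. A n * RL_int c (\<alpha> * of_nat n + \<beta>) f x) sums prab_int \<alpha> \<beta> \<omega> \<rho> \<kappa> c f x"
        using c1 c2 by blast
    qed
  qed
  show ?thesis
    using ae unif unfolding A_def by blast
qed

end
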